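(* For $(x,y)\in\mathbb{Z}^2$ let $\epsilon=\epsilon(x,y)$ be $1/2$ if $x$ and $y$ are both odd and $0$ otherwise, so that $(x,y,\epsilon+m)\in H(\mathbb{Z})$ for all $m\in\mathbb{Z}$. Then the word length $|(x,y,\epsilon+m)|_{\sf std}$ is a nondecreasing function of $m\in\{0,1,2,\dots\}$.
   Context: $H(\mathbb{Z})$ is written in exponential coordinates: the group law is $(x,y,z)(x',y',z')=(x+x',y+y',z+z'+\tfrac12(xy'-yx'))$ and $H(\mathbb{Z})=\{(x,y,z):x,y\in\mathbb{Z},z\in\mathbb{Z}+\epsilon(x,y)\}$. $|\cdot|_{\sf std}$ is word length with respect to ${\sf std}=\{\pm{\sf e}_1,\pm{\sf e}_2\}$, ${\sf e}_1=(1,0,0)$, ${\sf e}_2=(0,1,0)$. *)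

theory Defs
  imports Complex_Main
begin

text \<open>Heisenberg group in exponential coordinates, elements as real triples.\<close>
type_synonym heis = "real \<times> real \<times> real"

definition hmult :: "heis \<Rightarrow> heis \<Rightarrow> heis" where
  "hmult p q = (case p of (x, y, z) \<Rightarrow> case q of (x', y', z') \<Rightarrow>
     (x + x', y + y', z + z' + (x * y' - y * x') / 2))"

definition hone :: heis where "hone = (0, 0, 0)"

definition e1 :: heis where "e1 = (1, 0, 0)"
definition e2 :: heis where "e2 = (0, 1, 0)"

text \<open>Inverse in exponential coordinates is negation.\<close>
definition std :: "heis set" where
  "std = {e1, (-1, 0, 0), e2, (0, -1, 0)}"

definition eps :: "int \<Rightarrow> int \<Rightarrow> real" where
  "eps x y = (if odd x \<and> odd y then 1/2 else 0)"

definition word_eval :: "heis list \<Rightarrow> heis" where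
  "word_eval w = foldr hmult w hone"

definition word_len_std :: "heis \<Rightarrow> nat" where
  "word_len_std g = (LEAST n. \<exists>w. set w \<subseteq> std \<and> length w = n \<and> word_eval w = g)"

end

theory Submission
  imports Defs
begin

lemma hmult_assoc: "hmult (hmult a b) c = hmult a (hmult b c)"
  by (cases a; cases b; cases c) (simp add: hmult_def field_simps)

lemma hmult_hone_left[simp]: "hmult hone q = q"
  by (cases q) (simp add: hmult_def hone_def)

lemma hmult_hone_right[simp]: "hmult q hone = q"
  by (cases q) (simp add: hmult_def hone_def)

lemma foldr_hmult: "foldr hmult p X = hmult (foldr hmult p hone) X"
  by (induction p) (auto simp: hmult_assoc)

lemma eval_append: "word_eval (p @ q) = hmult (word_eval p) (word_eval q)"
  unfolding word_eval_def foldr_append o_apply by (rule foldr_hmult)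

lemma eval_Cons: "word_eval (a # q) = hmult a (word_eval q)"
  unfolding word_eval_def by simp

lemma eval_Nil[simp]: "word_eval [] = hone"
  unfolding word_eval_def by simp

definition phi :: "heis \<Rightarrow> heis" where "phi p = (case p of (x,y,z) \<Rightarrow> (x,y,-z))"

lemma phi_anti: "phi (hmult p q) = hmult (phi q) (phi p)"
  by (cases p; cases q) (simp add: phi_def hmult_def field_simps)

lemma phi_std: "a \<in> std \<Longrightarrow> phi a = a"
  by (auto simp: std_def phi_def e1_def e2_def)

lemma phi_hone: "phi hone = hone" by (simp add: phi_def hone_def)

lemma eval_rev: "set w \<subseteq> std \<Longrightarrow> word_eval (rev w) = phi (word_eval w)"
proof (induction w)
  case Nil then show ?case by (simp add: phi_hone)
next
  case (Cons g v)
  then show ?case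
    by (simp add: eval_append eval_Cons phi_anti phi_std)
qed

definition S :: "heis list \<Rightarrow> heis list \<Rightarrow> bool" where
  "S w w' = (\<exists>p a b q. w = p @ [a,b] @ q \<and> w' = p @ [b,a] @ q)"

lemma S_prefix: "S\<^sup>*\<^sup>* x y \<Longrightarrow> S\<^sup>*\<^sup>* (g # x) (g # y)"
proof (induction rule: rtranclp_induct)
  case base then show ?case by simp
next
  case (step y z)
  have "S (g # y) (g # z)" using step(2) unfolding S_def
    by (metis append_Cons)
  then show ?case using step(3) by simp
qed

lemma S_move: "S\<^sup>*\<^sup>* (g # u) (u @ [g])"
proof (induction u)
  case Nil then show ?case by simp
next
  case (Cons c u)
  have "S (g # c # u) (c # g # u)" unfolding S_def
    by (intro exI[of _ "[]"] exI[of _ g] exI[of _ c] exI[of _ u]) simp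
  then show ?case using S_prefix[OF Cons] by (simp add: converse_rtranclp_into_rtranclp)
qed

lemma S_rev: "S\<^sup>*\<^sup>* w (rev w)"
proof (induction w)
  case Nil then show ?case by simp
next
  case (Cons g v)
  have "S\<^sup>*\<^sup>* (g # v) (g # rev v)" by (rule S_prefix[OF Cons])
  moreover have "S\<^sup>*\<^sup>* (g # rev v) (rev v @ [g])" by (rule S_move)
  ultimately show ?case by (simp add: rtranclp_trans)
qed

definition Z :: "heis list \<Rightarrow> real" where "Z w = snd (snd (word_eval w))"
definition XY :: "heis list \<Rightarrow> real \<times> real" where "XY w = (fst (word_eval w), fst (snd (word_eval w)))"

lemma swap_gen:
  assumes "a \<in> std" "b \<in> std"
  shows "fst (hmult a b) = fst (hmult b a) \<and> fst (snd (hmult a b)) = fst (snd (hmult b a))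
     \<and> snd (snd (hmult a b)) - snd (snd (hmult b a)) \<in> {-1,0,1}"
  using assms by (auto simp: std_def hmult_def e1_def e2_def)

lemma mult_left_cong:
  assumes "fst Q1 = fst Q2" "fst (snd Q1) = fst (snd Q2)"
  shows "fst (hmult P Q1) = fst (hmult P Q2) \<and> fst (snd (hmult P Q1)) = fst (snd (hmult P Q2))
     \<and> snd (snd (hmult P Q1)) - snd (snd (hmult P Q2)) = snd (snd Q1) - snd (snd Q2)"
  using assms by (cases P; cases Q1; cases Q2) (simp add: hmult_def field_simps)

lemma mult_right_cong:
  assumes "fst Q1 = fst Q2" "fst (snd Q1) = fst (snd Q2)"
  shows "fst (hmult Q1 P) = fst (hmult Q2 P) \<and> fst (snd (hmult Q1 P)) = fst (snd (hmult Q2 P))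
     \<and> snd (snd (hmult Q1 P)) - snd (snd (hmult Q2 P)) = snd (snd Q1) - snd (snd Q2)"
  using assms by (cases P; cases Q1; cases Q2) (simp add: hmult_def field_simps)

lemma S_step:
  assumes "S w w'" "set w \<subseteq> std"
  shows "set w' \<subseteq> std \<and> length w' = length w \<and> XY w' = XY w \<and> Z w' - Z w \<in> {-1,0,1}"
proof -
  obtain p a b q where w: "w = p @ [a,b] @ q" and w': "w' = p @ [b,a] @ q"
    using assms(1) unfolding S_def by blast
  have ab: "a \<in> std" "b \<in> std" using assms(2) w by auto
  have e: "word_eval w = hmult (word_eval p) (hmult (hmult a b) (word_eval q))"
    "word_eval w' = hmult (word_eval p) (hmult (hmult b a) (word_eval q))"
    using w w' by (simp_all add: eval_append eval_Cons hmult_assoc)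
  note s = swap_gen[OF ab(2) ab(1)]
  note r = mult_right_cong[of "hmult b a" "hmult a b" "word_eval q"]
  note l = mult_left_cong[of "hmult (hmult b a) (word_eval q)" "hmult (hmult a b) (word_eval q)" "word_eval p"]
  have "set w' = set w" using w w' by auto
  moreover have "length w' = length w" using w w' by simp
  moreover have "XY w' = XY w" "Z w' - Z w \<in> {-1,0,1}"
    using s r l unfolding XY_def Z_def e by auto
  ultimately show ?thesis using assms(2) by simp
qed

lemma chain:
  assumes "S\<^sup>*\<^sup>* w w'" "set w \<subseteq> std"
  shows "set w' \<subseteq> std \<and> length w' = length w \<and> XY w' = XY w \<and> Z w' - Z w \<in> \<int> \<and>
    (\<forall>t. t - Z w \<in> \<int> \<and> min (Z w) (Z w') \<le> t \<and> t \<le> max (Z w) (Z w') \<longrightarrow>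
       (\<exists>u. set u \<subseteq> std \<and> length u = length w \<and> XY u = XY w \<and> Z u = t))"
  using assms(1)
proof (induction rule: rtranclp_induct)
  case base
  then show ?case using assms(2) by (auto intro!: exI[of _ w])
next
  case (step v v')
  have IH: "set v \<subseteq> std" "length v = length w" "XY v = XY w" "Z v - Z w \<in> \<int>"
    "\<And>t. t - Z w \<in> \<int> \<Longrightarrow> min (Z w) (Z v) \<le> t \<Longrightarrow> t \<le> max (Z w) (Z v) \<Longrightarrow>
       (\<exists>u. set u \<subseteq> std \<and> length u = length w \<and> XY u = XY w \<and> Z u = t)"
    using step(3) by auto
  have st: "set v' \<subseteq> std" "length v' = length v" "XY v' = XY v" "Z v' - Z v \<in> {-1,0,1}"
    using S_step[OF step(2) IH(1)] by auto
  have zi: "Z v' - Z w \<in> \<int>"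
  proof -
    have "Z v' - Z v \<in> \<int>" using st(4) by auto
    then have "(Z v' - Z v) + (Z v - Z w) \<in> \<int>" using IH(4) by (rule Ints_add)
    then show ?thesis by simp
  qed
  have main: "\<exists>u. set u \<subseteq> std \<and> length u = length w \<and> XY u = XY w \<and> Z u = t"
    if t: "t - Z w \<in> \<int>" "min (Z w) (Z v') \<le> t" "t \<le> max (Z w) (Z v')" for t
  proof (cases "min (Z w) (Z v) \<le> t \<and> t \<le> max (Z w) (Z v)")
    case True then show ?thesis using IH(5) t(1) by blast
  next
    case False
    have "t - Z v \<in> \<int>"
    proof -
      have "(t - Z w) - (Z v - Z w) \<in> \<int>" using t(1) IH(4) by (rule Ints_diff)
      then show ?thesis by simp
    qed
    then obtain k where k: "t - Z v = of_int k" by (metis Ints_cases)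
    have "t = Z v \<or> t = Z v'"
    proof -
      from st(4) consider "Z v' - Z v = -1" | "Z v' - Z v = 0" | "Z v' - Z v = 1" by auto
      then show ?thesis
      proof cases
        case 1
        then have "-1 \<le> real_of_int k" "real_of_int k \<le> 0" using False t k by (auto simp: min_def max_def split: if_splits)
        then have "k = -1 \<or> k = 0" by linarith
        then show ?thesis using k 1 by auto
      next
        case 2 then show ?thesis using False t by (auto simp: min_def max_def split: if_splits)
      next
        case 3
        then have "0 \<le> real_of_int k" "real_of_int k \<le> 1" using False t k by (auto simp: min_def max_def split: if_splits)
        then have "k = 1 \<or> k = 0" by linarith
        then show ?thesis using k 3 by auto
      qed
    qed
    then show ?thesis using IH st by (metis)
  qed
  show ?case using st IH zi main by auto
qed



lemma eval_rep: "word_eval (replicate n (a,b,0)) = (real n * a, real n * b, 0)"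
  by (induction n) (simp_all add: eval_Cons hmult_def hone_def algebra_simps)

definition wx :: "int \<Rightarrow> heis list" where
  "wx x = (if 0 \<le> x then replicate (nat x) e1 else replicate (nat (-x)) (-1,0,0))"
definition wy :: "int \<Rightarrow> heis list" where
  "wy x = (if 0 \<le> x then replicate (nat x) e2 else replicate (nat (-x)) (0,-1,0))"

lemma wx: "word_eval (wx x) = (real_of_int x, 0, 0) \<and> set (wx x) \<subseteq> std"
  by (auto simp: wx_def e1_def eval_rep std_def)
lemma wy: "word_eval (wy x) = (0, real_of_int x, 0) \<and> set (wy x) \<subseteq> std"
  by (auto simp: wy_def e2_def eval_rep std_def)

definition cw :: "heis list" where "cw = [e1, e2, (-1,0,0), (0,-1,0)]"
definition cwi :: "heis list" where "cwi = [e2, e1, (0,-1,0), (-1,0,0)]"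

lemma cw_eval: "word_eval cw = (0,0,1)" "word_eval cwi = (0,0,-1)"
  by (simp_all add: cw_def cwi_def eval_Cons hmult_def hone_def e1_def e2_def)

lemma cwp: "word_eval (concat (replicate n cw)) = (0,0,real n)"
  by (induction n) (simp_all add: eval_append cw_eval hmult_def hone_def)
lemma cwip: "word_eval (concat (replicate n cwi)) = (0,0,- real n)"
  by (induction n) (simp_all add: eval_append cw_eval hmult_def hone_def)

definition wk :: "int \<Rightarrow> heis list" where
  "wk k = (if 0 \<le> k then concat (replicate (nat k) cw) else concat (replicate (nat (-k)) cwi))"

lemma wk: "word_eval (wk k) = (0, 0, real_of_int k) \<and> set (wk k) \<subseteq> std"
proof
  show "word_eval (wk k) = (0, 0, real_of_int k)" by (simp add: wk_def cwp cwip)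
  have a: "set cw \<subseteq> std" "set cwi \<subseteq> std" by (auto simp: cw_def cwi_def std_def)
  have b: "set (concat (replicate n l)) \<subseteq> set l" for n and l :: "heis list" by (induction n) auto
  have c: "set (concat (replicate n cw)) \<subseteq> std" "set (concat (replicate n cwi)) \<subseteq> std" for n
    using order_trans[OF b a(1)] order_trans[OF b a(2)] by blast+
  show "set (wk k) \<subseteq> std" unfolding wk_def by (cases "0 \<le> k") (simp_all only: if_P if_not_P if_False if_True c)
qed

lemma reach: "\<exists>w. set w \<subseteq> std \<and> word_eval w = (real_of_int x, real_of_int y, real_of_int x * real_of_int y / 2 + real_of_int k)"
proof -
  have "word_eval (wx x @ wy y @ wk k) = (real_of_int x, real_of_int y, real_of_int x * real_of_int y / 2 + real_of_int k)"
    using wx[of x] wy[of y] wk[of k] by (simp add: eval_append hmult_def)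
  moreover have "set (wx x @ wy y @ wk k) \<subseteq> std" using wx[of x] wy[of y] wk[of k] by simp
  ultimately show ?thesis by blast
qed

lemma eps_int: "\<exists>j::int. eps x y = real_of_int x * real_of_int y / 2 + real_of_int j"
proof (cases "odd x \<and> odd y")
  case True
  then have "odd (x*y)" by simp
  then obtain j where "x * y = 2*j+1" by (metis oddE)
  then have "real_of_int x * real_of_int y = 2 * real_of_int j + 1" by (metis of_int_add of_int_mult of_int_numeral of_int_1 )
  then show ?thesis using True by (intro exI[of _ "-j"]) (simp add: eps_def field_simps)
next
  case False
  then have "even (x*y)" by auto
  then obtain j where "x * y = 2*j" by (metis evenE)
  then have "real_of_int x * real_of_int y = 2 * real_of_int j" by (metis of_int_mult of_int_numeral)
  then show ?thesis using False by (intro exI[of _ "-j"]) (simp add: eps_def field_simps)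
qed

lemma eps_nonneg: "eps x y \<ge> 0" by (simp add: eps_def)

lemma step_main:
  fixes x y :: int and m :: nat
  shows "word_len_std (real_of_int x, real_of_int y, eps x y + real m)
       \<le> word_len_std (real_of_int x, real_of_int y, eps x y + real (Suc m))"
proof -
  let ?g = "(real_of_int x, real_of_int y, eps x y + real (Suc m))"
  let ?h = "(real_of_int x, real_of_int y, eps x y + real m)"
  let ?P = "\<lambda>g n. \<exists>w. set w \<subseteq> std \<and> length w = n \<and> word_eval w = g"
  obtain j where j: "eps x y = real_of_int x * real_of_int y / 2 + real_of_int j" using eps_int by blast
  obtain w0 where "set w0 \<subseteq> std" "word_eval w0 = ?g"
    using reach[of x y "j + int (Suc m)"] j by auto
  then have ex: "\<exists>n. ?P ?g n" by blast
  have "?P ?g (word_len_std ?g)" unfolding word_len_std_def by (rule LeastI_ex[OF ex])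
  then obtain w where w: "set w \<subseteq> std" "length w = word_len_std ?g" "word_eval w = ?g" by blast
  have Zw: "Z w = eps x y + real (Suc m)" using w(3) by (simp add: Z_def)
  have Zr: "Z (rev w) = - (eps x y + real (Suc m))"
    using w(3) eval_rev[OF w(1)] by (simp add: Z_def phi_def)
  have h1: "(eps x y + real m) - Z w \<in> \<int>"
  proof -
    have "(eps x y + real m) - Z w = of_int (-1)" using Zw by simp
    then show ?thesis by (metis Ints_of_int)
  qed
  have h2: "min (Z w) (Z (rev w)) \<le> eps x y + real m" "eps x y + real m \<le> max (Z w) (Z (rev w))"
    using Zw Zr eps_nonneg[of x y] by auto
  have Cq: "\<forall>t. t - Z w \<in> \<int> \<and> min (Z w) (Z (rev w)) \<le> t \<and> t \<le> max (Z w) (Z (rev w)) \<longrightarrow>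
       (\<exists>u. set u \<subseteq> std \<and> length u = length w \<and> XY u = XY w \<and> Z u = t)"
    using chain[OF S_rev w(1)] by blast
  obtain u where u: "set u \<subseteq> std" "length u = length w" "XY u = XY w" "Z u = eps x y + real m"
    using Cq[rule_format, OF conjI[OF h1 conjI[OF h2(1) h2(2)]]] by blast
  have "word_eval u = ?h"
    using u(3,4) w(3) unfolding XY_def Z_def by (simp add: prod_eq_iff)
  then have hP: "?P ?h (length u)" using u(1) by blast
  have "word_len_std ?h \<le> length u"
    unfolding word_len_std_def by (rule Least_le) (rule hP)
  then show ?thesis using u(2) w(2) by simp
qed

theorem mainTheorem18:
  fixes x y :: int
  shows "mono (\<lambda>m::nat. word_len_std (real_of_int x, real_of_int y, eps x y + real m))"
  unfolding mono_iff_le_Suc using step_main by blast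

end
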